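(* Let $H^*$ be a $k$-factor on $[n]$ and $G\supseteq H^*$ a simple graph on $[n]$. If a planted edge $e\in H^*$ belongs to an alternating circuit in $G$, then $e$ belongs to the core $C_n$ produced by the iterative pruning algorithm run on $G$.
   Context: A $k$-factor on $[n]$ is a $k$-regular simple graph with vertex set $[n]$, identified with its edge set. Edges of $H^*$ are planted (red), edges of $G$ not in $H^*$ are unplanted (blue). An alternating circuit is a closed walk in $G$ with pairwise distinct edges (vertices may repeat) whose edges alternate between planted and unplanted, including between the last and the first edge. Iterative pruning algorithm: assign each vertex $i$ capacity $\kappa_i=k$. Repeat as long as possible: pick a vertex $v$ of the current graph whose current degree equals its current capacity; declare all edges incident to $v$ planted, delete $v$ and its incident edges, and decrease by one the capacity of the other endpoint of each deleted edge; then every vertex whose capacity has dropped to $0$ is deleted together with all its incident edges. The procedure stops when every remaining vertex has degree strictly larger than its capacity. The core $C_n$ is the remaining graph at termination. *)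

theory Defs
  imports Main
begin

definition simple_graph_on :: "nat \<Rightarrow> nat set set \<Rightarrow> bool" where
  "simple_graph_on n E \<longleftrightarrow> (\<forall>e\<in>E. \<exists>u v. e = {u, v} \<and> u \<noteq> v \<and> u \<in> {1..n} \<and> v \<in> {1..n})"

definition k_factor :: "nat \<Rightarrow> nat \<Rightarrow> nat set set \<Rightarrow> bool" where
  "k_factor n k H \<longleftrightarrow> simple_graph_on n H \<and> (\<forall>v\<in>{1..n}. card {e\<in>H. v \<in> e} = k)"

text \<open>Edges traversed by a closed walk given by its cyclic vertex list xs:
  the i-th edge joins xs!i and xs!((i+1) mod length xs).\<close>

definition walk_edge :: "nat list \<Rightarrow> nat \<Rightarrow> nat set" where
  "walk_edge xs i = {xs ! i, xs ! (Suc i mod length xs)}"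

definition alternating_circuit :: "nat set set \<Rightarrow> nat set set \<Rightarrow> nat list \<Rightarrow> bool" where
  "alternating_circuit G H xs \<longleftrightarrow>
     xs \<noteq> [] \<and>
     (\<forall>i<length xs. walk_edge xs i \<in> G) \<and>
     inj_on (walk_edge xs) {..<length xs} \<and>
     (\<forall>i<length xs. walk_edge xs i \<in> H \<longleftrightarrow> walk_edge xs (Suc i mod length xs) \<notin> H)"

text \<open>Pruning algorithm. A state is (remaining vertex set V, capacity function).
  The current graph is G restricted to V (edges are only ever removed
  together with an endpoint).\<close>

definition cur_deg :: "nat set set \<Rightarrow> nat set \<Rightarrow> nat \<Rightarrow> nat" where
  "cur_deg G V v = card {u\<in>V. {v, u} \<in> G}"

inductive prune_step :: "nat set set \<Rightarrow> nat set \<times> (nat \<Rightarrow> nat) \<Rightarrow> nat set \<times> (nat \<Rightarrow> nat) \<Rightarrow> bool"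
  for G where
  "\<lbrakk> v \<in> V; cur_deg G V v = cap v;
     cap' = (\<lambda>u. if u \<in> V - {v} \<and> {v, u} \<in> G then cap u - 1 else cap u);
     V' = (V - {v}) - {u\<in>V - {v}. {v, u} \<in> G \<and> cap' u = 0} \<rbrakk>
   \<Longrightarrow> prune_step G (V, cap) (V', cap')"

definition prune_terminal :: "nat set set \<Rightarrow> nat set \<times> (nat \<Rightarrow> nat) \<Rightarrow> bool" where
  "prune_terminal G S \<longleftrightarrow> (\<forall>v\<in>fst S. cur_deg G (fst S) v \<noteq> snd S v)"

definition core_edges :: "nat set set \<Rightarrow> nat set \<Rightarrow> nat set set" where
  "core_edges G V = {e\<in>G. e \<subseteq> V}"

end

theory Submission
  imports Defs
begin

lemma sg_ne: "simple_graph_on n G \<Longrightarrow> {a,b} \<in> G \<Longrightarrow> a \<noteq> b \<and> a \<in> {1..n} \<and> b \<in> {1..n}"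
  unfolding simple_graph_on_def
  by (metis doubleton_eq_iff)

lemma circuit_nbrs:
  assumes sg: "simple_graph_on n G" and ac: "alternating_circuit G H xs" and x: "x \<in> set xs"
  shows "(\<exists>w\<in>set xs. w \<noteq> x \<and> {x,w} \<in> H) \<and> (\<exists>w\<in>set xs. w \<noteq> x \<and> {x,w} \<in> G \<and> {x,w} \<notin> H)"
proof -
  define m where "m = length xs"
  obtain j where j: "j < m" "xs ! j = x" using x unfolding m_def by (metis in_set_conv_nth)
  have m0: "m > 0" using j by simp
  define p where "p = (j+m-1) mod m"
  have p: "p < m" using m0 p_def by simp
  have sp: "Suc p mod m = j"
  proof -
    have "Suc p mod m = Suc (j+m-1) mod m" unfolding p_def by (simp add: mod_Suc_eq)
    also have "Suc (j+m-1) = j + m" using m0 by simp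
    finally show ?thesis using j by simp
  qed
  have ep: "walk_edge xs p = {xs!p, x}" unfolding walk_edge_def using sp j m_def by simp
  have ej: "walk_edge xs j = {x, xs!(Suc j mod m)}" unfolding walk_edge_def using j m_def by simp
  have Gp: "{xs!p, x} \<in> G" using ac p ep unfolding alternating_circuit_def m_def by metis
  have Gj: "{x, xs!(Suc j mod m)} \<in> G" using ac j ej unfolding alternating_circuit_def m_def by metis
  have alt: "{xs!p, x} \<in> H \<longleftrightarrow> {x, xs!(Suc j mod m)} \<notin> H"
    using ac p ep ej sp unfolding alternating_circuit_def m_def by metis
  have np: "xs!p \<noteq> x" using sg_ne[OF sg Gp] by simp
  have nj: "xs!(Suc j mod m) \<noteq> x" using sg_ne[OF sg Gj] by simp
  have inp: "xs!p \<in> set xs" using p m_def by simp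
  have inj: "xs!(Suc j mod m) \<in> set xs" using m0 m_def by simp
  show ?thesis
  proof (cases "{x, xs!(Suc j mod m)} \<in> H")
    case True
    then show ?thesis using alt Gp np nj inp inj by (metis insert_commute)
  next
    case False
    then show ?thesis using alt Gj np nj inp inj by (metis insert_commute)
  qed
qed

definition inv :: "nat \<Rightarrow> nat set set \<Rightarrow> nat list \<Rightarrow> nat set \<times> (nat \<Rightarrow> nat) \<Rightarrow> bool" where
  "inv n H xs S \<longleftrightarrow> fst S \<subseteq> {1..n} \<and> set xs \<subseteq> fst S \<and>
     (\<forall>u\<in>fst S. snd S u = card {w\<in>fst S. {u,w}\<in>H})"

lemma step_inv:
  assumes sg: "simple_graph_on n G" and ac: "alternating_circuit G H xs" and HG: "H \<subseteq> G"
    and st: "prune_step G S S'" and iv: "inv n H xs S"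
  shows "inv n H xs S'"
  using st
proof cases
  case (1 v V cap cap' V')
  note S = 1
  have Vn: "V \<subseteq> {1..n}" and xV: "set xs \<subseteq> V" and capV: "\<forall>u\<in>V. cap u = card {w\<in>V. {u,w}\<in>H}"
    using iv S unfolding inv_def by auto
  have finV: "finite V" using Vn finite_subset by blast
  have sub: "{w\<in>V. {v,w}\<in>H} \<subseteq> {w\<in>V. {v,w}\<in>G}" using HG by auto
  have fin2: "finite {w\<in>V. {v,w}\<in>G}" using finV by simp
  have cardeq: "card {w\<in>V. {v,w}\<in>H} = card {w\<in>V. {v,w}\<in>G}"
    using S capV unfolding cur_deg_def by auto
  have NG: "\<And>w. w \<in> V \<Longrightarrow> {v,w}\<in>G \<Longrightarrow> {v,w}\<in>H"
  proof -
    fix w assume "w \<in> V" "{v,w}\<in>G"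
    have "{w\<in>V. {v,w}\<in>H} = {w\<in>V. {v,w}\<in>G}" using card_subset_eq[OF fin2 sub cardeq] .
    then show "{v,w}\<in>H" using \<open>w \<in> V\<close> \<open>{v,w}\<in>G\<close> by blast
  qed
  have vnot: "v \<notin> set xs"
  proof
    assume "v \<in> set xs"
    then obtain w where "w \<in> set xs" "w \<noteq> v" "{v,w}\<in>G" "{v,w}\<notin>H"
      using circuit_nbrs[OF sg ac] by blast
    then show False using NG xV by blast
  qed
  have keep: "cap' w \<noteq> 0" if w: "w \<in> V" "w \<noteq> v" "{v,w}\<in>G" and u: "u \<in> V" "u \<noteq> v" "{w,u} \<in> H" for w u
  proof -
    have vw: "{w,v} \<in> H" using NG w by (metis insert_commute)
    have wu: "w \<noteq> u" using sg_ne[OF sg] u HG by blast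
    have "{v,u} \<subseteq> {x\<in>V. {w,x}\<in>H}" using vw u S by auto
    moreover have "finite {x\<in>V. {w,x}\<in>H}" using finV by simp
    ultimately have "card {v,u} \<le> card {x\<in>V. {w,x}\<in>H}" by (rule card_mono[rotated])
    then have "cap w \<ge> 2" using capV w u by simp
    then show ?thesis using S w by simp
  qed
  have xV': "set xs \<subseteq> V'"
  proof
    fix x assume x: "x \<in> set xs"
    have xv: "x \<noteq> v" using x vnot by blast
    obtain u where u: "u \<in> set xs" "u \<noteq> x" "{x,u} \<in> H" using circuit_nbrs[OF sg ac x] by blast
    have "u \<noteq> v" using u vnot by blast
    then have "{v,x}\<in>G \<Longrightarrow> cap' x \<noteq> 0" using keep[of x u] x xV xv u by blast
    then have "x \<notin> {u\<in>V - {v}. {v,u}\<in>G \<and> cap' u = 0}" by blast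
    then show "x \<in> V'" unfolding S(6) using x xV xv by blast
  qed
  have capV': "\<forall>u\<in>V'. cap' u = card {w\<in>V'. {u,w}\<in>H}"
  proof
    fix u assume u: "u \<in> V'"
    have uV: "u \<in> V" "u \<noteq> v" using u S by auto
    have eq: "{w\<in>V'. {u,w}\<in>H} = {w\<in>V. {u,w}\<in>H} - {v}"
    proof
      show "{w\<in>V'. {u,w}\<in>H} \<subseteq> {w\<in>V. {u,w}\<in>H} - {v}" using S by auto
      show "{w\<in>V. {u,w}\<in>H} - {v} \<subseteq> {w\<in>V'. {u,w}\<in>H}"
      proof
        fix w assume w: "w \<in> {w\<in>V. {u,w}\<in>H} - {v}"
        have wu: "{w,u}\<in>H" using w by (auto simp: insert_commute)
        have "{v,w}\<in>G \<Longrightarrow> cap' w \<noteq> 0" using keep[of w u] w uV wu by blast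
        then have "w \<notin> {u\<in>V - {v}. {v,u}\<in>G \<and> cap' u = 0}" by blast
        then show "w \<in> {w\<in>V'. {u,w}\<in>H}" unfolding S(6) using w by blast
      qed
    qed
    have fu: "finite {w\<in>V. {u,w}\<in>H}" using finV by simp
    show "cap' u = card {w\<in>V'. {u,w}\<in>H}"
    proof (cases "{v,u}\<in>G")
      case True
      then have "{u,v}\<in>H" using NG uV by (metis insert_commute)
      then have "v \<in> {w\<in>V. {u,w}\<in>H}" using S by auto
      then have "card {w\<in>V'. {u,w}\<in>H} = card {w\<in>V. {u,w}\<in>H} - 1" using eq fu by simp
      moreover have "cap' u = cap u - 1" using S(5) True uV by simp
      ultimately show ?thesis using uV capV by simp
    next
      case False
      then have "{u,v}\<notin>H" using HG by (metis insert_commute subsetD)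
      then have "{w\<in>V'. {u,w}\<in>H} = {w\<in>V. {u,w}\<in>H}" using eq by auto
      moreover have "cap' u = cap u" using S(5) False by simp
      ultimately show ?thesis using uV capV by simp
    qed
  qed
  have "V' \<subseteq> {1..n}" using Vn unfolding S(6) by blast
  then show ?thesis using xV' capV' unfolding inv_def S(2) by simp
qed

theorem mainTheorem14:
  fixes n k :: nat and G H :: "nat set set" and e :: "nat set"
  assumes "k_factor n k H"
    and "simple_graph_on n G"
    and "H \<subseteq> G"
    and "e \<in> H"
    and "alternating_circuit G H xs"
    and "\<exists>i<length xs. walk_edge xs i = e"
    and "(prune_step G)\<^sup>*\<^sup>* ({1..n}, \<lambda>_. k) S"
    and "prune_terminal G S"
  shows "e \<in> core_edges G (fst S)"
proof -
  have xsn: "set xs \<subseteq> {1..n}"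
  proof
    fix x assume "x \<in> set xs"
    then obtain w where "{x,w} \<in> G" using circuit_nbrs[OF assms(2) assms(5)] by blast
    then show "x \<in> {1..n}" using sg_ne[OF assms(2)] by blast
  qed
  have i0: "inv n H xs ({1..n}, \<lambda>_. k)"
    unfolding inv_def
  proof (intro conjI ballI)
    fix u assume u: "u \<in> fst ({1..n::nat}, \<lambda>_::nat. k)"
    have "{e\<in>H. u \<in> e} = (\<lambda>w. {u,w}) ` {w\<in>{1..n}. {u,w}\<in>H}"
    proof
      show "{e\<in>H. u \<in> e} \<subseteq> (\<lambda>w. {u,w}) ` {w\<in>{1..n}. {u,w}\<in>H}"
      proof
        fix e assume e: "e \<in> {e\<in>H. u \<in> e}"
        then obtain a b where ab: "e = {a,b}" "a \<in> {1..n}" "b \<in> {1..n}"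
          using assms(1) unfolding k_factor_def simple_graph_on_def by blast
        show "e \<in> (\<lambda>w. {u,w}) ` {w\<in>{1..n}. {u,w}\<in>H}"
        proof (cases "u = a")
          case True then show ?thesis using e ab by auto
        next
          case False then have "u = b" using e ab by auto
          then show ?thesis using e ab by (auto simp: insert_commute)
        qed
      qed
    qed auto
    moreover have "inj_on (\<lambda>w. {u,w}) {w\<in>{1..n}. {u,w}\<in>H}"
    proof (rule inj_onI)
      fix x y assume x: "x \<in> {w\<in>{1..n}. {u,w}\<in>H}" and y: "y \<in> {w\<in>{1..n}. {u,w}\<in>H}" and eq: "{u,x} = {u,y}"
      have "u \<noteq> x" "u \<noteq> y" using x y sg_ne[OF assms(2)] assms(3) by blast+
      then show "x = y" using eq by (metis doubleton_eq_iff)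
    qed
    ultimately have "card {e\<in>H. u \<in> e} = card {w\<in>{1..n}. {u,w}\<in>H}" by (simp add: card_image)
    then show "snd ({1..n::nat}, \<lambda>_::nat. k) u = card {w \<in> fst ({1..n}, \<lambda>_. k). {u, w} \<in> H}"
      using assms(1) u unfolding k_factor_def by simp
  qed (use xsn in auto)
  have "inv n H xs S"
    using assms(7) i0
  proof (induction rule: rtranclp_induct)
    case base then show ?case by simp
  next
    case (step y z) then show ?case using step_inv[OF assms(2) assms(5) assms(3)] by blast
  qed
  then have xS: "set xs \<subseteq> fst S" unfolding inv_def by simp
  obtain i where i: "i < length xs" "walk_edge xs i = e" using assms(6) by blast
  have "e \<in> G" using assms(3,4) by blast
  moreover have "e \<subseteq> set xs" using i unfolding walk_edge_def
    by (metis empty_subsetI insert_subset length_pos_if_in_set mod_less_divisor nth_mem)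
  ultimately show ?thesis using xS unfolding core_edges_def by auto
qed

end
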